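(* Let $K\subset\mathbb{R}^n$ be compact, $g\in C^1(\mathbb{R}^n)$, $j>0$, and $$E=\{x\in K:\ g(y)\ge g(x)+\langle\nabla g(x),y-x\rangle-j|y-x|^2\ \text{for all } y\in K\}.$$ Then for almost every $x\in E$, $$\limsup_{y\to x,\ y\in E}\frac{|g(y)-g(x)-\langle\nabla g(x),y-x\rangle|}{|y-x|^2}<+\infty.$$
   Context: "Almost every" refers to Lebesgue measure on $\mathbb{R}^n$. *)

theory Defs
  imports "HOL-Analysis.Analysis"
begin

end

theory Submission
  imports Defs
begin


lemma conv_slope_mono:
  fixes h :: "real \<Rightarrow> real"
  assumes "convex_on UNIV h" "u < v" "v < w"
  shows "(h v - h u) / (v - u) \<le> (h w - h v) / (w - v)"
proof -
  have "(h u - h v) / (u - v) \<le> (h v - h w) / (v - w)"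
    using convex_on_slope_le(1)[OF assms(1), of u w v] convex_on_slope_le(2)[OF assms(1), of u w v] assms
    by auto
  moreover have "(h u - h v) / (u - v) = (h v - h u) / (v - u)"
    using minus_divide_divide[of "h v - h u" "v - u"] by simp
  moreover have "(h v - h w) / (v - w) = (h w - h v) / (w - v)"
    using minus_divide_divide[of "h w - h v" "w - v"] by simp
  ultimately show ?thesis by simp
qed

definition rder :: "(real \<Rightarrow> real) \<Rightarrow> real \<Rightarrow> real" where
  "rder h u = Inf ((\<lambda>v. (h v - h u) / (v - u)) ` {u<..})"

lemma rder_le:
  assumes "convex_on UNIV h" "u < v"
  shows "rder h u \<le> (h v - h u) / (v - u)"
  unfolding rder_def
proof (rule cInf_lower)
  show "(h v - h u) / (v - u) \<in> (\<lambda>v. (h v - h u) / (v - u)) ` {u<..}" using assms by auto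
  show "bdd_below ((\<lambda>v. (h v - h u) / (v - u)) ` {u<..})"
    unfolding bdd_below_def
  proof (rule exI[of _ "(h u - h (u - 1)) / (u - (u - 1))"], intro ballI)
    fix y assume "y \<in> (\<lambda>v. (h v - h u) / (v - u)) ` {u<..}"
    then obtain x where "u < x" "y = (h x - h u) / (x - u)" by auto
    then show "(h u - h (u - 1)) / (u - (u - 1)) \<le> y"
      using conv_slope_mono[OF assms(1), of "u - 1" u x] by simp
  qed
qed

lemma rder_ge:
  assumes "convex_on UNIV h" "u < v"
  shows "(h v - h u) / (v - u) \<le> rder h v"
  unfolding rder_def
  by (rule cInf_greatest) (auto intro!: conv_slope_mono[OF assms(1)] simp: assms)

lemma rder_mono:
  assumes "convex_on UNIV h" "u \<le> v"
  shows "rder h u \<le> rder h v"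
proof (cases "u = v")
  case False
  then show ?thesis using rder_le[OF assms(1), of u v] rder_ge[OF assms(1), of u v] assms by auto
qed simp

lemma sd_le_rder:
  assumes "convex_on UNIV h" "0 < t"
  shows "h (s + t) + h (s - t) - 2 * h s \<le> t * (rder h (s + t) - rder h (s - t))"
proof -
  have 1: "(h (s+t) - h s) / ((s+t) - s) \<le> rder h (s+t)"
    using rder_ge[OF assms(1), of s "s+t"] assms by simp
  have 2: "rder h (s-t) \<le> (h s - h (s-t)) / (s - (s-t))"
    using rder_le[OF assms(1), of "s-t" s] assms by simp
  have "h (s + t) + h (s - t) - 2 * h s = t * ((h (s+t) - h s) / ((s+t) - s) - (h s - h (s-t)) / (s - (s-t)))"
    using assms by (simp add: field_simps)
  also have "\<dots> \<le> t * (rder h (s + t) - rder h (s - t))"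
    using 1 2 assms by (intro mult_left_mono) auto
  finally show ?thesis .
qed

lemma telescope:
  fixes r :: "real \<Rightarrow> real"
  assumes "mono r" "finite I"
    and "\<And>i. i \<in> I \<Longrightarrow> A \<le> c i \<and> c i \<le> d i \<and> d i \<le> B"
    and "\<And>i j. i \<in> I \<Longrightarrow> j \<in> I \<Longrightarrow> i \<noteq> j \<Longrightarrow> d i < c j \<or> d j < c i"
    and "A \<le> B"
  shows "(\<Sum>i\<in>I. r (d i) - r (c i)) \<le> r B - r A"
  using assms(2-)
proof (induction "card I" arbitrary: I B rule: less_induct)
  case less
  show ?case
  proof (cases "I = {}")
    case True
    then show ?thesis using less.prems \<open>mono r\<close> by (simp add: monoD)
  next
    case False
    have "Max (c ` I) \<in> c ` I" using False less.prems(1) by (intro Max_in) auto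
    then obtain i0 where i0a: "i0 \<in> I" "c i0 = Max (c ` I)" by auto
    have i0: "i0 \<in> I" "\<And>i. i \<in> I \<Longrightarrow> c i \<le> c i0"
      using i0a less.prems(1) by auto
    have others: "d i < c i0" if "i \<in> I - {i0}" for i
      using less.prems(3)[of i i0] less.prems(2)[of i] less.prems(2)[of i0] i0 that by force
    have IH: "(\<Sum>i\<in>I - {i0}. r (d i) - r (c i)) \<le> r (c i0) - r A"
    proof (rule less.hyps)
      show "card (I - {i0}) < card I" using i0 less.prems(1) by (meson card_Diff1_less)
      show "finite (I - {i0})" using less.prems(1) by simp
      show "A \<le> c i \<and> c i \<le> d i \<and> d i \<le> c i0" if "i \<in> I - {i0}" for i
        using others[OF that] less.prems(2)[of i] that by auto
      show "d i < c j \<or> d j < c i" if "i \<in> I - {i0}" "j \<in> I - {i0}" "i \<noteq> j" for i j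
        using less.prems(3) that by auto
      show "A \<le> c i0" using less.prems(2) i0 by auto
    qed
    have "(\<Sum>i\<in>I. r (d i) - r (c i)) = (r (d i0) - r (c i0)) + (\<Sum>i\<in>I - {i0}. r (d i) - r (c i))"
      using i0 less.prems(1) by (simp add: sum.remove)
    also have "\<dots> \<le> r B - r A"
      using IH monoD[OF \<open>mono r\<close>, of "d i0" B] less.prems(2)[of i0] i0 by linarith
    finally show ?thesis .
  qed
qed


lemma disj_cball_sep:
  fixes s s' t t' :: real
  assumes "disjnt (cball s t) (cball s' t')" "0 < t" "0 < t'"
  shows "s + t < s' - t' \<or> s' + t' < s - t"
proof (rule ccontr)
  assume a: "\<not> ?thesis"
  define m where "m = max (s - t) (s' - t')"
  have "m \<in> {s - t..s + t}" "m \<in> {s' - t'..s' + t'}"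
    using a assms(2,3) unfolding m_def by auto
  then have "m \<in> cball s t" "m \<in> cball s' t'" by (simp_all only: cball_eq_atLeastAtMost)
  then show False using assms(1) unfolding disjnt_def by blast
qed

lemma bad1_local:
  fixes h :: "real \<Rightarrow> real" and k :: real
  assumes cv: "convex_on UNIV h" and k: "0 \<le> k"
  defines "N \<equiv> {s. \<forall>C>0. \<forall>\<delta>>0. \<exists>t. 0 < t \<and> t < \<delta> \<and> C * t\<^sup>2 < h (s+t) + h (s-t) - 2 * h s}"
  shows "negligible (N \<inter> ball 0 k)"
  unfolding negligible_outer_le
proof (intro allI impI)
  fix e :: real assume e: "0 < e"
  define S where "S = N \<inter> ball 0 k"
  define M where "M = rder h (k+1) - rder h (-(k+1))"
  have M0: "0 \<le> M" unfolding M_def using rder_mono[OF cv, of "-(k+1)" "k+1"] k by simp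
  define C where "C = 2 * (M + 1) / e"
  have C0: "0 < C" unfolding C_def using M0 e by simp
  define K where "K = {(s,t). s \<in> S \<and> 0 < t \<and> t < 1 \<and> C * t\<^sup>2 < h (s+t) + h (s-t) - 2 * h s}"
  have cov: "\<exists>i. i \<in> K \<and> x \<in> cball (fst i) (snd i) \<and> snd i < d" if xS: "x \<in> S" and d0: "0 < d" for x d
  proof -
    have "x \<in> N" using xS S_def by auto
    then have hx: "\<And>C \<delta>. 0 < C \<Longrightarrow> 0 < \<delta> \<Longrightarrow> \<exists>t. 0 < t \<and> t < \<delta> \<and> C * t\<^sup>2 < h (x+t) + h (x-t) - 2 * h x"
      unfolding N_def by blast
    obtain t where t: "0 < t" "t < min d 1" "C * t\<^sup>2 < h (x+t) + h (x-t) - 2 * h x"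
      using hx[OF C0, of "min d 1"] d0 by auto
    then show ?thesis using xS by (intro exI[of _ "(x,t)"]) (auto simp: K_def)
  qed
  obtain D where D: "countable D" "D \<subseteq> K"
     "pairwise (\<lambda>i j. disjnt (cball (fst i) (snd i)) (cball (fst j) (snd j))) D"
     "negligible (S - (\<Union>i \<in> D. cball (fst i) (snd i)))"
  proof -
    have Kpos: "\<And>i. i \<in> K \<Longrightarrow> 0 < snd i" unfolding K_def by auto
    show ?thesis
      apply (rule Vitali_covering_theorem_cballs[of K snd S fst])
        apply (erule Kpos)
       apply (erule (1) cov)
      apply (erule (3) that)
      done
  qed
  define U where "U = (\<Union>i \<in> D. cball (fst i) (snd i))"
  have Kprop: "fst i \<in> S \<and> 0 < snd i \<and> snd i < 1 \<and> C * (snd i)\<^sup>2 < h (fst i + snd i) + h (fst i - snd i) - 2 * h (fst i)"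
    if "i \<in> D" for i using that D(2) unfolding K_def by auto
  have bound: "measure lebesgue (\<Union>i\<in>I'. cball (fst i) (snd i)) \<le> 2 * M / C"
    if I': "I' \<subseteq> D" "finite I'" for I'
  proof -
    have "measure lebesgue (\<Union>i\<in>I'. cball (fst i) (snd i)) \<le> (\<Sum>i\<in>I'. measure lebesgue (cball (fst i) (snd i)))"
      using measure_UNION_le[of I' "\<lambda>i. cball (fst i) (snd i)" lebesgue] I' by auto
    also have "\<dots> = (\<Sum>i\<in>I'. 2 * snd i)"
    proof (rule sum.cong[OF refl])
      fix i assume "i \<in> I'"
      then have "0 < snd i" using Kprop I' by blast
      then show "measure lebesgue (cball (fst i) (snd i)) = 2 * snd i"
        by (simp add: cball_eq_atLeastAtMost)
    qed
    also have "\<dots> \<le> (\<Sum>i\<in>I'. (2 / C) * (rder h (fst i + snd i) - rder h (fst i - snd i)))"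
    proof (rule sum_mono)
      fix i assume "i \<in> I'"
      then have "i \<in> D" using I' by blast
      then have P: "fst i \<in> S" "0 < snd i" "C * (snd i)\<^sup>2 < h (fst i + snd i) + h (fst i - snd i) - 2 * h (fst i)"
        using Kprop by blast+
      have "C * (snd i)\<^sup>2 < snd i * (rder h (fst i + snd i) - rder h (fst i - snd i))"
        using P(3) sd_le_rder[OF cv P(2), of "fst i"] by linarith
      then have "C * snd i < rder h (fst i + snd i) - rder h (fst i - snd i)"
        using P(2) by (simp add: power2_eq_square)
      then show "2 * snd i \<le> (2 / C) * (rder h (fst i + snd i) - rder h (fst i - snd i))"
        using C0 by (simp add: field_simps)
    qed
    also have "\<dots> = (2 / C) * (\<Sum>i\<in>I'. rder h (fst i + snd i) - rder h (fst i - snd i))"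
      by (simp add: sum_distrib_left)
    also have "\<dots> \<le> (2 / C) * M"
    proof (intro mult_left_mono)
      show "0 \<le> 2 / C" using C0 by simp
      show "(\<Sum>i\<in>I'. rder h (fst i + snd i) - rder h (fst i - snd i)) \<le> M"
        unfolding M_def
      proof (rule telescope[where r="rder h" and c="\<lambda>i. fst i - snd i" and d="\<lambda>i. fst i + snd i" and A="-(k+1)" and B="k+1"])
        show "mono (rder h)" using rder_mono[OF cv] by (auto intro: monoI)
        show "finite I'" by fact
        show "- (k + 1) \<le> fst i - snd i \<and> fst i - snd i \<le> fst i + snd i \<and> fst i + snd i \<le> k + 1"
          if "i \<in> I'" for i
        proof -
          have "i \<in> D" using that I' by blast
          then have "fst i \<in> ball 0 k" "0 < snd i" "snd i < 1" using Kprop S_def by blast+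
          then show ?thesis by (auto simp: dist_real_def)
        qed
        show "fst i + snd i < fst j - snd j \<or> fst j + snd j < fst i - snd i"
          if "i \<in> I'" "j \<in> I'" "i \<noteq> j" for i j
        proof -
          have "i \<in> D" "j \<in> D" using that I' by blast+
          then have "0 < snd i" "0 < snd j" using Kprop by blast+
          moreover have "disjnt (cball (fst i) (snd i)) (cball (fst j) (snd j))"
            using D(3) \<open>i \<in> D\<close> \<open>j \<in> D\<close> that(3) unfolding pairwise_def by blast
          ultimately show ?thesis by (intro disj_cball_sep)
        qed
        show "- (k + 1) \<le> k + 1" using k by simp
      qed
    qed
    finally show ?thesis by simp
  qed
  have Ufm: "U \<in> lmeasurable" and Um: "measure lebesgue U \<le> 2 * M / C"
    unfolding U_def
    using fmeasurable_UN_bound[OF D(1) _ bound] measure_UN_bound[OF D(1) _ bound] by auto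
  have SU: "S - U \<in> lmeasurable" "measure lebesgue (S - U) = 0"
    using D(4) unfolding U_def by (auto simp: negligible_iff_measure)
  have "measure lebesgue ((S - U) \<union> U) \<le> measure lebesgue (S - U) + measure lebesgue U"
    using SU Ufm by (intro measure_Un_le) auto
  also have "\<dots> \<le> 2 * M / C" using SU Um by simp
  also have "\<dots> \<le> e" unfolding C_def using e M0 by (simp add: field_simps)
  finally have "measure lebesgue ((S - U) \<union> U) \<le> e" .
  moreover have "(S - U) \<union> U \<in> lmeasurable" using SU(1) Ufm by (rule fmeasurable.Un)
  ultimately show "\<exists>T. N \<inter> ball 0 k \<subseteq> T \<and> T \<in> lmeasurable \<and> measure lebesgue T \<le> e"
    using SU Ufm by (intro exI[of _ "(S - U) \<union> U"]) (auto simp: S_def)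
qed

lemma bad1_negligible:
  fixes h :: "real \<Rightarrow> real"
  assumes cv: "convex_on UNIV h"
  shows "negligible {s. \<forall>C>0. \<forall>\<delta>>0. \<exists>t. 0 < t \<and> t < \<delta> \<and> C * t\<^sup>2 < h (s+t) + h (s-t) - 2 * h s}"
    (is "negligible ?N")
proof -
  have "?N = \<Union> (range (\<lambda>k::nat. ?N \<inter> ball 0 (real k)))"
    by (auto simp: dist_real_def) (meson reals_Archimedean2)
  also have "negligible \<dots>"
    by (rule negligible_countable_Union) (auto intro: bad1_local[OF cv])
  finally show ?thesis .
qed



lemma convexUD:
  assumes "convex_on UNIV f" "0 \<le> u" "0 \<le> v" "u + v = 1"
  shows "f (u *\<^sub>R x + v *\<^sub>R y) \<le> u * f x + v * f y"
  using assms unfolding convex_on_def by blast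

lemma convex_line:
  fixes \<phi> :: "'a::euclidean_space \<Rightarrow> real"
  assumes cv: "convex_on UNIV \<phi>"
  shows "convex_on UNIV (\<lambda>y. \<phi> (w + y *\<^sub>R i))"
proof (rule convex_onI)
  fix t x y :: real assume t: "0 < t" "t < 1"
  have "w + ((1 - t) *\<^sub>R x + t *\<^sub>R y) *\<^sub>R i = (1 - t) *\<^sub>R (w + x *\<^sub>R i) + t *\<^sub>R (w + y *\<^sub>R i)"
    by (simp add: algebra_simps)
  then show "\<phi> (w + ((1 - t) *\<^sub>R x + t *\<^sub>R y) *\<^sub>R i) \<le> (1 - t) * \<phi> (w + x *\<^sub>R i) + t * \<phi> (w + y *\<^sub>R i)"
    using convexUD[OF cv, of "1 - t" t] t by simp
qed (rule convex_UNIV)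

lemma badn_borel:
  fixes \<phi> :: "'a::euclidean_space \<Rightarrow> real"
  assumes cv: "convex_on UNIV \<phi>"
  shows "{x. \<forall>C>0. \<forall>\<delta>>0. \<exists>t. 0 < t \<and> t < \<delta> \<and> C * t\<^sup>2 < \<phi> (x + t *\<^sub>R i) + \<phi> (x - t *\<^sub>R i) - 2 * \<phi> x} \<in> sets borel"
    (is "?B \<in> _")
proof -
  have cont: "continuous_on UNIV \<phi>" using convex_on_continuous[OF open_UNIV cv] .
  define Op where "Op n m = {x. \<exists>t. 0 < t \<and> t < 1 / real (Suc m) \<and> real (Suc n) * t\<^sup>2 < \<phi> (x + t *\<^sub>R i) + \<phi> (x - t *\<^sub>R i) - 2 * \<phi> x}" for n m :: nat
  have Oopen: "open (Op n m)" for n m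
  proof -
    have "Op n m = (\<Union>t\<in>{0<..<1 / real (Suc m)}. {x. real (Suc n) * t\<^sup>2 < \<phi> (x + t *\<^sub>R i) + \<phi> (x - t *\<^sub>R i) - 2 * \<phi> x})"
      unfolding Op_def by auto
    also have "open \<dots>"
    proof (intro open_UN ballI open_Collect_less continuous_intros)
      fix t :: real
      show "continuous_on UNIV (\<lambda>x. \<phi> (x + t *\<^sub>R i))"
        by (rule continuous_on_compose2[OF cont]) (auto intro!: continuous_intros)
      show "continuous_on UNIV (\<lambda>x. \<phi> (x - t *\<^sub>R i))"
        by (rule continuous_on_compose2[OF cont]) (auto intro!: continuous_intros)
      show "continuous_on UNIV \<phi>" by (rule cont)
    qed
    finally show ?thesis .
  qed
  have eq: "?B = (\<Inter>n. \<Inter>m. Op n m)"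
  proof (intro equalityI subsetI)
    fix x assume "x \<in> ?B"
    then show "x \<in> (\<Inter>n. \<Inter>m. Op n m)" unfolding Op_def by auto
  next
    fix x assume x: "x \<in> (\<Inter>n. \<Inter>m. Op n m)"
    show "x \<in> ?B"
    proof (intro CollectI allI impI)
      fix C \<delta> :: real assume C: "0 < C" and d: "0 < \<delta>"
      obtain n :: nat where n: "C \<le> real (Suc n)"
        by (metis less_eq_real_def of_nat_Suc real_arch_simple add.commute add_increasing zero_le_one)
      obtain m :: nat where m: "1 / real (Suc m) < \<delta>"
        using d by (metis nat_approx_posE)
      from x have "x \<in> Op n m" by blast
      then obtain t where t: "0 < t" "t < 1 / real (Suc m)"
        "real (Suc n) * t\<^sup>2 < \<phi> (x + t *\<^sub>R i) + \<phi> (x - t *\<^sub>R i) - 2 * \<phi> x"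
        unfolding Op_def by blast
      have le: "C * t\<^sup>2 \<le> real (Suc n) * t\<^sup>2" using n by (intro mult_right_mono) auto
      show "\<exists>t>0. t < \<delta> \<and> C * t\<^sup>2 < \<phi> (x + t *\<^sub>R i) + \<phi> (x - t *\<^sub>R i) - 2 * \<phi> x"
        by (intro exI[of _ t] conjI) (use t m le in linarith)+
    qed
  qed
  show ?thesis unfolding eq
    using Oopen by (intro sets.countable_INT'' sets.countable_INT'') auto
qed


lemma badn_null:
  fixes \<phi> :: "'a::euclidean_space \<Rightarrow> real"
  assumes cv: "convex_on UNIV \<phi>" and i: "i \<in> Basis"
  shows "{x. \<forall>C>0. \<forall>\<delta>>0. \<exists>t. 0 < t \<and> t < \<delta> \<and> C * t\<^sup>2 < \<phi> (x + t *\<^sub>R i) + \<phi> (x - t *\<^sub>R i) - 2 * \<phi> x} \<in> null_sets lebesgue"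
    (is "?B \<in> _")
proof -
  have Bb: "?B \<in> sets borel" by (rule badn_borel[OF cv])
  interpret P: product_sigma_finite "\<lambda>_::'a. lborel :: real measure"
    by (simp add: product_sigma_finite_def lborel.sigma_finite_measure_axioms)
  define S where "S f = (\<Sum>b\<in>Basis. f b *\<^sub>R b)" for f :: "'a \<Rightarrow> real"
  have Smeas: "S \<in> (\<Pi>\<^sub>M b\<in>Basis. lborel) \<rightarrow>\<^sub>M borel" unfolding S_def by measurable
  have fmeas: "(\<lambda>f. indicator ?B (S f) :: ennreal) \<in> borel_measurable (\<Pi>\<^sub>M b\<in>Basis. lborel)"
    using measurable_compose[OF Smeas borel_measurable_indicator[OF Bb]] by (simp add: comp_def)
  have inner: "(\<integral>\<^sup>+ y. indicator ?B (S (x(i := y))) \<partial>lborel) = 0" for x :: "'a \<Rightarrow> real"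
  proof -
    define w where "w = (\<Sum>b\<in>Basis - {i}. x b *\<^sub>R b)"
    have Sx: "S (x(i := y)) = w + y *\<^sub>R i" for y
    proof -
      have "S (x(i := y)) = y *\<^sub>R i + (\<Sum>b\<in>Basis - {i}. (x(i := y)) b *\<^sub>R b)"
        unfolding S_def using i by (simp add: sum.remove)
      also have "(\<Sum>b\<in>Basis - {i}. (x(i := y)) b *\<^sub>R b) = w"
        unfolding w_def by (intro sum.cong) auto
      finally show ?thesis by (simp only: add.commute)
    qed
    define Y where "Y = {y. w + y *\<^sub>R i \<in> ?B}"
    have Yb: "Y \<in> sets borel"
    proof -
      have "(\<lambda>y::real. w + y *\<^sub>R i) \<in> borel_measurable borel" by measurable
      then have "(\<lambda>y::real. w + y *\<^sub>R i) -` ?B \<inter> space borel \<in> sets borel"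
        using Bb by (rule measurable_sets)
      then show ?thesis unfolding Y_def by (simp add: vimage_def)
    qed
    define h where "h y = \<phi> (w + y *\<^sub>R i)" for y
    have hcv: "convex_on UNIV h" unfolding h_def by (rule convex_line[OF cv])
    have "Y \<subseteq> {s. \<forall>C>0. \<forall>\<delta>>0. \<exists>t. 0 < t \<and> t < \<delta> \<and> C * t\<^sup>2 < h (s+t) + h (s-t) - 2 * h s}"
    proof
      fix y assume "y \<in> Y"
      moreover have "w + y *\<^sub>R i + t *\<^sub>R i = w + (y + t) *\<^sub>R i" "w + y *\<^sub>R i - t *\<^sub>R i = w + (y - t) *\<^sub>R i" for t
        by (simp_all add: algebra_simps)
      ultimately show "y \<in> {s. \<forall>C>0. \<forall>\<delta>>0. \<exists>t. 0 < t \<and> t < \<delta> \<and> C * t\<^sup>2 < h (s+t) + h (s-t) - 2 * h s}"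
        unfolding Y_def h_def by simp
    qed
    then have "negligible Y" using bad1_negligible[OF hcv] negligible_subset by blast
    then have "Y \<in> null_sets lebesgue" by (simp add: negligible_iff_null_sets)
    then have Ynull: "Y \<in> null_sets lborel" using null_sets_completion_iff[of Y lborel] Yb by simp
    have "(\<integral>\<^sup>+ y. indicator ?B (S (x(i := y))) \<partial>lborel) = (\<integral>\<^sup>+ y. indicator Y y \<partial>lborel)"
      unfolding Sx Y_def by (simp add: indicator_def)
    also have "\<dots> = emeasure lborel Y" using Yb by simp
    also have "\<dots> = 0" using Ynull by auto
    finally show ?thesis .
  qed
  have "emeasure lborel ?B = (\<integral>\<^sup>+ x. indicator ?B x \<partial>lborel)" using Bb by simp
  also have "\<dots> = (\<integral>\<^sup>+ x. indicator ?B x \<partial>distr (\<Pi>\<^sub>M b\<in>Basis. lborel) borel S)"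
    unfolding S_def by (simp only: lborel_eq[symmetric])
  also have "\<dots> = (\<integral>\<^sup>+ f. indicator ?B (S f) \<partial>(\<Pi>\<^sub>M b\<in>Basis. lborel))"
    using Bb by (intro nn_integral_distr[OF Smeas]) simp
  also have "\<dots> = (\<integral>\<^sup>+ f. indicator ?B (S f) \<partial>(\<Pi>\<^sub>M b\<in>insert i (Basis - {i}). lborel))"
    using i by (simp add: insert_absorb)
  also have "\<dots> = (\<integral>\<^sup>+ x. (\<integral>\<^sup>+ y. indicator ?B (S (x(i := y))) \<partial>lborel) \<partial>(\<Pi>\<^sub>M b\<in>Basis - {i}. lborel))"
    using fmeas i by (intro P.product_nn_integral_insert) (auto simp: insert_absorb)
  also have "\<dots> = 0" by (simp add: inner)
  finally have "?B \<in> null_sets lborel" using Bb by auto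
  then show ?thesis by (rule null_sets_completionI)
qed



lemma convexUD':
  assumes "convex_on UNIV f" "0 \<le> u" "0 \<le> v" "u + v = 1"
  shows "f (u *\<^sub>R x + v *\<^sub>R y) \<le> u * f x + v * f y"
  using assms unfolding convex_on_def by blast

lemma cross_bound:
  fixes \<phi> :: "'a::euclidean_space \<Rightarrow> real" and p x y :: 'a
  assumes cv: "convex_on UNIV \<phi>"
    and line: "\<And>i t. i \<in> Basis \<Longrightarrow> 0 < t \<Longrightarrow> t < \<delta> \<Longrightarrow>
        \<phi> (x + t *\<^sub>R i) - \<phi> x - p \<bullet> ((x + t *\<^sub>R i) - x) \<le> Cs * t\<^sup>2 \<and>
        \<phi> (x + (- t) *\<^sub>R i) - \<phi> x - p \<bullet> ((x + (- t) *\<^sub>R i) - x) \<le> Cs * t\<^sup>2"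
    and yx: "0 < norm (y - x)" "real DIM('a) * norm (y - x) < \<delta>" and Cs: "0 \<le> Cs"
  shows "\<phi> y - \<phi> x - p \<bullet> (y - x) \<le> Cs * (real DIM('a))\<^sup>2 * (norm (y - x))\<^sup>2"
proof -
  define c where "c i = (y - x) \<bullet> i" for i
  define s where "s = (\<Sum>i\<in>Basis. \<bar>c i\<bar>)"
  define w where "w i = \<bar>c i\<bar> / s" for i
  define z where "z i = x + (s * sgn (c i)) *\<^sub>R i" for i
  have s0: "0 < s"
  proof (rule ccontr)
    assume "\<not> 0 < s"
    then have "s = 0" unfolding s_def by (meson abs_ge_zero not_le sum_nonneg order.antisym)
    then have "\<forall>i\<in>Basis. c i = 0" unfolding s_def by (simp add: sum_nonneg_eq_0_iff)
    then have "y - x = 0" unfolding c_def using euclidean_all_zero_iff by blast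
    then show False using yx by simp
  qed
  have sle: "s \<le> real DIM('a) * norm (y - x)"
  proof -
    have "s \<le> (\<Sum>i\<in>(Basis::'a set). norm (y - x))"
      unfolding s_def c_def by (intro sum_mono Basis_le_norm)
    then show ?thesis by simp
  qed
  have wsum: "(\<Sum>i\<in>Basis. w i) = 1"
    unfolding w_def using s0 by (simp add: sum_divide_distrib[symmetric] s_def)
  have w0: "0 \<le> w i" for i unfolding w_def using s0 by simp
  have ysum: "(\<Sum>i\<in>Basis. w i *\<^sub>R z i) = y"
  proof -
    have "(\<Sum>i\<in>Basis. w i *\<^sub>R z i) = (\<Sum>i\<in>Basis. w i *\<^sub>R x) + (\<Sum>i\<in>Basis. c i *\<^sub>R i)"
    proof -
      have "w i *\<^sub>R z i = w i *\<^sub>R x + c i *\<^sub>R i" for i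
      proof -
        have "w i * (s * sgn (c i)) = \<bar>c i\<bar> * sgn (c i)"
          unfolding w_def using s0 by simp
        also have "\<dots> = c i" by (cases "c i" "0::real" rule: linorder_cases) auto
        finally have "w i * (s * sgn (c i)) = c i" .
        then show ?thesis unfolding z_def by (simp add: scaleR_add_right)
      qed
      then show ?thesis by (simp add: sum.distrib)
    qed
    also have "(\<Sum>i\<in>Basis. w i *\<^sub>R x) = x" using wsum by (simp add: scaleR_sum_left[symmetric])
    also have "(\<Sum>i\<in>Basis. c i *\<^sub>R i) = y - x" unfolding c_def by (rule euclidean_representation)
    finally show ?thesis by simp
  qed
  have jensen: "\<phi> y \<le> (\<Sum>i\<in>Basis. w i * \<phi> (z i))"
    using convex_on_sum[OF finite_Basis _ cv wsum, of z] w0 ysum by auto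
  have plin: "p \<bullet> (y - x) = (\<Sum>i\<in>Basis. w i * (p \<bullet> (z i - x)))"
  proof -
    have "y - x = (\<Sum>i\<in>Basis. w i *\<^sub>R (z i - x))"
      using ysum wsum by (simp add: scaleR_diff_right sum_subtractf scaleR_sum_left[symmetric])
    then show ?thesis by (simp add: inner_sum_right)
  qed
  have each: "w i * (\<phi> (z i) - \<phi> x - p \<bullet> (z i - x)) \<le> w i * (Cs * s\<^sup>2)" if i: "i \<in> Basis" for i
  proof (cases "c i = 0")
    case True
    then show ?thesis unfolding w_def by simp
  next
    case False
    have sd: "s < \<delta>" using sle yx by linarith
    have "\<phi> (z i) - \<phi> x - p \<bullet> (z i - x) \<le> Cs * s\<^sup>2"
    proof (cases "c i > 0")
      case True
      then have "z i = x + s *\<^sub>R i" unfolding z_def by simp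
      then show ?thesis using line[OF i s0 sd] by simp
    next
      case False
      with \<open>c i \<noteq> 0\<close> have "z i = x + (- s) *\<^sub>R i" unfolding z_def by simp
      then show ?thesis using line[OF i s0 sd] by simp
    qed
    then show ?thesis using w0[of i] by (rule mult_left_mono)
  qed
  have "\<phi> y - \<phi> x - p \<bullet> (y - x) \<le> (\<Sum>i\<in>Basis. w i * (\<phi> (z i) - \<phi> x - p \<bullet> (z i - x)))"
  proof -
    have "(\<Sum>i\<in>Basis. w i * (\<phi> (z i) - \<phi> x - p \<bullet> (z i - x)))
        = (\<Sum>i\<in>Basis. w i * \<phi> (z i)) - (\<Sum>i\<in>Basis. w i) * \<phi> x - (\<Sum>i\<in>Basis. w i * (p \<bullet> (z i - x)))"
      by (simp add: right_diff_distrib sum_subtractf sum_distrib_right)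
    then show ?thesis using jensen plin wsum by simp
  qed
  also have "\<dots> \<le> (\<Sum>i\<in>Basis. w i * (Cs * s\<^sup>2))" by (intro sum_mono each)
  also have "\<dots> = Cs * s\<^sup>2" using wsum by (simp add: sum_distrib_right[symmetric])
  also have "\<dots> \<le> Cs * (real DIM('a) * norm (y - x))\<^sup>2"
    using sle s0 Cs by (intro mult_left_mono power_mono) auto
  finally show ?thesis by (simp add: power_mult_distrib mult.assoc)
qed



theorem claim4:
  fixes K :: "'a::euclidean_space set"
    and g :: "'a \<Rightarrow> real"
    and G :: "'a \<Rightarrow> 'a"
    and j :: real
    and E :: "'a set"
  assumes "compact K"
    and "\<And>x. (g has_derivative (\<lambda>h. G x \<bullet> h)) (at x)"
    and "continuous_on UNIV G"
    and "j > 0"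
    and "E = {x \<in> K. \<forall>y\<in>K. g y \<ge> g x + G x \<bullet> (y - x) - j * (norm (y - x))\<^sup>2}"
  shows "AE x in lebesgue. x \<in> E \<longrightarrow>
           Limsup (at x within E)
             (\<lambda>y. ereal (\<bar>g y - g x - G x \<bullet> (y - x)\<bar> / (norm (y - x))\<^sup>2)) < \<infinity>"
proof (cases "E = {}")
  case True
  then show ?thesis by simp
next
  case False
  note Edef = assms(5)
  have EK: "E \<subseteq> K" using Edef by auto
  have Econd: "g z + G z \<bullet> (y - z) - j * (norm (y - z))\<^sup>2 \<le> g y" if "z \<in> E" "y \<in> K" for z y
    using that Edef by auto
  define b where "b z = G z + (2 * j) *\<^sub>R z" for z
  define a where "a z = g z - G z \<bullet> z - j * (norm z)\<^sup>2" for z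
  define \<phi> where "\<phi> y = (SUP z\<in>E. a z + b z \<bullet> y)" for y
  have gcont: "continuous_on UNIV g"
    using assms(2) has_derivative_continuous continuous_at_imp_continuous_on by blast
  have acont: "continuous_on K a" unfolding a_def
    using gcont assms(3) by (auto intro!: continuous_intros elim: continuous_on_subset)
  have bcont: "continuous_on K b" unfolding b_def
    using assms(3) by (auto intro!: continuous_intros elim: continuous_on_subset)
  obtain Ma where Ma: "\<And>z. z \<in> K \<Longrightarrow> norm (a z) \<le> Ma"
    using compact_imp_bounded[OF compact_continuous_image[OF acont assms(1)]]
    unfolding bounded_iff by auto
  obtain Mb where Mb: "\<And>z. z \<in> K \<Longrightarrow> norm (b z) \<le> Mb"
    using compact_imp_bounded[OF compact_continuous_image[OF bcont assms(1)]]
    unfolding bounded_iff by auto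
  have bdd: "bdd_above ((\<lambda>z. a z + b z \<bullet> y) ` E)" for y
  proof (rule bdd_aboveI2)
    fix z assume "z \<in> E"
    then have zK: "z \<in> K" using EK by auto
    have "b z \<bullet> y \<le> norm (b z) * norm y" by (rule norm_cauchy_schwarz)
    also have "\<dots> \<le> Mb * norm y" using Mb[OF zK] by (intro mult_right_mono) auto
    finally show "a z + b z \<bullet> y \<le> Ma + Mb * norm y" using Ma[OF zK] by auto
  qed
  have key1: "a z + b z \<bullet> y \<le> \<phi> y" if "z \<in> E" for z y
    unfolding \<phi>_def using that bdd by (rule cSUP_upper)
  have ident: "a z + b z \<bullet> y = g z + G z \<bullet> (y - z) - j * (norm (y - z))\<^sup>2 + j * (norm y)\<^sup>2" for z y
    unfolding a_def b_def
    by (simp add: power2_norm_eq_inner inner_diff_left inner_diff_right inner_add_left inner_commute algebra_simps)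
  have key2: "\<phi> y \<le> g y + j * (norm y)\<^sup>2" if "y \<in> K" for y
    unfolding \<phi>_def
  proof (rule cSUP_least[OF False])
    fix z assume "z \<in> E"
    then show "a z + b z \<bullet> y \<le> g y + j * (norm y)\<^sup>2" using Econd[OF _ that] ident by auto
  qed
  have key3: "\<phi> x = g x + j * (norm x)\<^sup>2" if "x \<in> E" for x
    using key1[OF that, of x] key2[of x] that EK ident[of x x] by auto
  have subgrad: "\<phi> x + b x \<bullet> (y - x) \<le> \<phi> y" if "x \<in> E" for x y
  proof -
    have "\<phi> x = a x + b x \<bullet> x" using key3[OF that] ident[of x x] by simp
    then show ?thesis using key1[OF that, of y] by (simp add: inner_diff_right)
  qed
  have cv: "convex_on UNIV \<phi>"
  proof (rule convex_onI)
    fix u v :: 'a and t :: real assume t: "0 < t" "t < 1"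
    show "\<phi> ((1 - t) *\<^sub>R u + t *\<^sub>R v) \<le> (1 - t) * \<phi> u + t * \<phi> v"
      unfolding \<phi>_def[of "(1 - t) *\<^sub>R u + t *\<^sub>R v"]
    proof (rule cSUP_least[OF False])
      fix z assume z: "z \<in> E"
      have "a z + b z \<bullet> ((1 - t) *\<^sub>R u + t *\<^sub>R v) = (1 - t) * (a z + b z \<bullet> u) + t * (a z + b z \<bullet> v)"
        by (simp add: inner_add_right algebra_simps)
      also have "\<dots> \<le> (1 - t) * \<phi> u + t * \<phi> v"
        using key1[OF z, of u] key1[OF z, of v] t by (intro add_mono mult_left_mono) auto
      finally show "a z + b z \<bullet> ((1 - t) *\<^sub>R u + t *\<^sub>R v) \<le> (1 - t) * \<phi> u + t * \<phi> v" .
    qed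
  qed (rule convex_UNIV)
  define Bad where "Bad i = {x. \<forall>C>0. \<forall>\<delta>>0. \<exists>t. 0 < t \<and> t < \<delta> \<and> C * t\<^sup>2 < \<phi> (x + t *\<^sub>R i) + \<phi> (x - t *\<^sub>R i) - 2 * \<phi> x}" for i
  have AEgood: "AE x in lebesgue. \<forall>i\<in>Basis. x \<notin> Bad i"
    by (intro AE_finite_allI finite_Basis AE_not_in) (unfold Bad_def, rule badn_null[OF cv])
  show ?thesis
    using AEgood
  proof (rule eventually_mono, intro impI)
    fix x assume good: "\<forall>i\<in>Basis. x \<notin> Bad i" and xE: "x \<in> E"
    show "Limsup (at x within E) (\<lambda>y. ereal (\<bar>g y - g x - G x \<bullet> (y - x)\<bar> / (norm (y - x))\<^sup>2)) < \<infinity>"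
    proof -
      have "\<forall>i\<in>Basis. \<exists>C>0. \<exists>\<delta>>0. \<forall>t. 0 < t \<and> t < \<delta> \<longrightarrow> \<phi> (x + t *\<^sub>R i) + \<phi> (x - t *\<^sub>R i) - 2 * \<phi> x \<le> C * t\<^sup>2"
        using good unfolding Bad_def by (simp add: not_less imp_conv_disj de_Morgan_conj disj_assoc) (simp only: not_le)
      then obtain Cf where Cf: "\<forall>i\<in>Basis. Cf i > 0 \<and> (\<exists>\<delta>>0. \<forall>t. 0 < t \<and> t < \<delta> \<longrightarrow> \<phi> (x + t *\<^sub>R i) + \<phi> (x - t *\<^sub>R i) - 2 * \<phi> x \<le> Cf i * t\<^sup>2)"
        by (metis (no_types, lifting) bchoice)
      then obtain \<delta>f where \<delta>f: "\<forall>i\<in>Basis. \<delta>f i > 0 \<and> (\<forall>t. 0 < t \<and> t < \<delta>f i \<longrightarrow> \<phi> (x + t *\<^sub>R i) + \<phi> (x - t *\<^sub>R i) - 2 * \<phi> x \<le> Cf i * t\<^sup>2)"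
        by (metis (no_types, lifting) bchoice)
      define Cs where "Cs = (\<Sum>i\<in>Basis. Cf i)"
      define \<delta>0 where "\<delta>0 = Min (\<delta>f ` Basis)"
      have Cs0: "0 \<le> Cs" unfolding Cs_def using Cf by (intro sum_nonneg) auto
      have CfCs: "Cf i \<le> Cs" if "i \<in> Basis" for i
        unfolding Cs_def using Cf that by (intro member_le_sum) auto
      have \<delta>0: "0 < \<delta>0" unfolding \<delta>0_def using \<delta>f by (simp add: Min_gr_iff)
      have \<delta>0le: "\<delta>0 \<le> \<delta>f i" if "i \<in> Basis" for i unfolding \<delta>0_def using that by simp
      have line: "\<phi> (x + t *\<^sub>R i) - \<phi> x - b x \<bullet> ((x + t *\<^sub>R i) - x) \<le> Cs * t\<^sup>2 \<and>
          \<phi> (x + (- t) *\<^sub>R i) - \<phi> x - b x \<bullet> ((x + (- t) *\<^sub>R i) - x) \<le> Cs * t\<^sup>2"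
        if i: "i \<in> Basis" and t: "0 < t" "t < \<delta>0" for i t
      proof -
        have sd: "\<phi> (x + t *\<^sub>R i) + \<phi> (x - t *\<^sub>R i) - 2 * \<phi> x \<le> Cf i * t\<^sup>2"
          using \<delta>f i t \<delta>0le[OF i] by auto
        have "Cf i * t\<^sup>2 \<le> Cs * t\<^sup>2" using CfCs[OF i] by (intro mult_right_mono) auto
        moreover have "\<phi> x + b x \<bullet> ((x + t *\<^sub>R i) - x) \<le> \<phi> (x + t *\<^sub>R i)" by (rule subgrad[OF xE])
        moreover have "\<phi> x + b x \<bullet> ((x - t *\<^sub>R i) - x) \<le> \<phi> (x - t *\<^sub>R i)" by (rule subgrad[OF xE])
        moreover have "b x \<bullet> ((x + t *\<^sub>R i) - x) + b x \<bullet> ((x - t *\<^sub>R i) - x) = 0"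
          by (simp add: inner_diff_right inner_add_right)
        ultimately show ?thesis using sd by (simp add: inner_diff_right inner_add_right)
      qed
      define n where "n = real DIM('a)"
      have n1: "1 \<le> n" unfolding n_def using DIM_positive by (simp add: Suc_le_eq)
      have ratio: "\<bar>g y - g x - G x \<bullet> (y - x)\<bar> / (norm (y - x))\<^sup>2 \<le> Cs * n\<^sup>2 + j"
        if yE: "y \<in> E" and yx: "0 < norm (y - x)" "norm (y - x) < \<delta>0 / n" for y
      proof -
        have "n * norm (y - x) < \<delta>0" using yx n1 by (simp add: field_simps)
        then have psi: "\<phi> y - \<phi> x - b x \<bullet> (y - x) \<le> Cs * n\<^sup>2 * (norm (y - x))\<^sup>2"
          unfolding n_def using cross_bound[OF cv line yx(1) _ Cs0] by blast
        have psi0: "0 \<le> \<phi> y - \<phi> x - b x \<bullet> (y - x)" using subgrad[OF xE, of y] by simp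
        have eq: "\<phi> y - \<phi> x - b x \<bullet> (y - x) = (g y - g x - G x \<bullet> (y - x)) + j * (norm (y - x))\<^sup>2"
          unfolding key3[OF xE] key3[OF yE] b_def
          by (simp add: power2_norm_eq_inner inner_diff_left inner_diff_right inner_add_left inner_commute algebra_simps)
        have "\<bar>g y - g x - G x \<bullet> (y - x)\<bar> \<le> (Cs * n\<^sup>2 + j) * (norm (y - x))\<^sup>2"
          using psi psi0 eq assms(4) by (simp add: algebra_simps abs_le_iff) (smt (verit) zero_le_power2 mult_nonneg_nonneg)
        then show ?thesis using yx by (simp add: divide_le_eq)
      qed
      have "eventually (\<lambda>y. ereal (\<bar>g y - g x - G x \<bullet> (y - x)\<bar> / (norm (y - x))\<^sup>2) \<le> ereal (Cs * n\<^sup>2 + j)) (at x within E)"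
        unfolding eventually_at
        using \<delta>0 n1 ratio by (intro exI[of _ "\<delta>0 / n"]) (auto simp: dist_norm)
      then have "Limsup (at x within E) (\<lambda>y. ereal (\<bar>g y - g x - G x \<bullet> (y - x)\<bar> / (norm (y - x))\<^sup>2)) \<le> ereal (Cs * n\<^sup>2 + j)"
        by (rule Limsup_bounded)
      then show ?thesis by (rule order.strict_trans1) simp
    qed
  qed
qed


end
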